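(* Consider $N\ge2$ agents $V=\{1,\dots,N\}$ with states $\mathbf x(t)\in\mathbb{R}^N$ evolving according to $$\dot{\mathbf x}(t)=-L(t)\mathbf x(t)+\mathbf u(t),$$ i.e. $\dot x_i=\sum_{j\in\mathcal N_i}|a_{ij}(t)|(\operatorname{sgn}(a_{ij}(t))x_j-x_i)+u_i$, over a time-varying signed interaction graph $\mathcal G_A(t)$ that is uniformly quasi strongly $\delta$-connected (with constant $T>0$) and whose coefficients satisfy (A1)–(A3) below. Suppose that for every $t\ge0$ the union graph $G_\delta[t,t+T)$ contains a fixed node set $S\subseteq V$ that forms a root node set (there is a $\delta$-path in $G_\delta[t,t+T)$ from $S$ to every other node), and that the subgraph induced by $S$ is persistently structurally balanced. Let $\mathbf x_d\in\mathbb{R}^N$ be any desired state and apply the control input $$\mathbf u(t)=L(t)\mathbf x_d-K(t)\bigl(\mathbf x(t)-\mathbf x_d\bigr),\qquad K(t)=\operatorname{diag}(k_1(t),\dots,k_N(t)),$$ where (P1) each $k_i(\cdot)$ is continuous for almost all $t\ge t_0$ (its discontinuities form a set of Lebesgue measure zero), and (P2) there exists $\underline\kappa>0$ such that $k_i(t)\in[\underline\kappa,\infty)$ for $i\in S$ and $k_j(t)\equiv0$ for $j\notin S$, for all $t\ge t_0$. Then the closed-loop system achieves the desired steady state: $\mathbf x(t)\to\mathbf x_d$ as $t\to\infty$.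
   Context: $t_0\ge0$ is the initial time. $\operatorname{sgn}$ is the sign function; $a_{ij}(t)\in\mathbb{R}$ is the signed influence of agent $j$ on agent $i$; $\mathcal N_i$ is the set of incoming neighbors of $i$. $L(t)$ is the signed Laplacian: $[L(t)]_{ii}=\sum_{k\in\mathcal N_i}|a_{ik}(t)|$, $[L(t)]_{ij}=-a_{ij}(t)$ for $i\neq j$. Solutions are understood in the Carathéodory (absolutely continuous) sense. Assumptions: (A1) each $a_{ij}(t)$ is piecewise continuous on every compact interval with discontinuity set of Lebesgue measure zero; (A2) $a_{ii}\equiv0$; (A3) there is $M_0>0$ with $\int_{t_1}^{t_2}|a_{ij}(s)|\,ds\le M_0(t_2-t_1)$ for all $t_1\le t_2$. Graph notions: for $\delta>0$, a $\delta$-arc from $j$ to $i$ on $[t_1,t_2)$ means $\int_{t_1}^{t_2}|a_{ij}(t)|\,dt\ge\delta(t_2-t_1)$; a $\delta$-path on $[t_1,t_2)$ is a directed path of $\delta$-arcs on $[t_1,t_2)$; $G_\delta[t_1,t_2)$ is the digraph on $V$ whose arcs are the $\delta$-arcs on $[t_1,t_2)$, and $G_\delta^\infty$ is the union of all $\delta$-arcs appearing over $[0,\infty)$; condensation graphs have strongly connected components (SCCs) as nodes, and an SCC is closed if it has no incoming arcs from other SCCs. $\mathcal G_A(t)$ is uniformly quasi strongly $\delta$-connected if there is $T>0$ such that for every $t\ge0$ the condensation graph of $G_\delta[t,t+T)$ has a root node with a $\delta$-path to every other node. Persistent structural balance: when $\mathcal G_A(t)$ is uniformly quasi strongly $\delta$-connected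 and the condensation graph of $G_\delta^\infty$ contains a fixed node set $S$ forming a closed SCC, this SCC is persistently structurally balanced if for all $t\ge0$ there exists a unique bipartition $S=V_1^s\cup V_2^s$, $V_1^s\cap V_2^s=\varnothing$, such that $a_{jk}(t)\ge0$ whenever $j,k$ lie in the same part and $a_{jk}(t)\le0$ whenever $j,k$ lie in different parts. *)

theory Defs
  imports "HOL-Analysis.Analysis"
begin

text \<open>Agents are the elements of a finite type 'n. Coefficients a i j t = a_ij(t)
  (influence of agent j on agent i). Vectors in R^N are functions 'n => real.\<close>

definition signed_lap :: "('n::finite \<Rightarrow> 'n \<Rightarrow> real \<Rightarrow> real) \<Rightarrow> real \<Rightarrow> 'n \<Rightarrow> 'n \<Rightarrow> real" where
  "signed_lap a t i j = (if i = j then (\<Sum>k\<in>{k. a i k t \<noteq> 0}. \<bar>a i k t\<bar>) else - a i j t)"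

definition mat_vec :: "('n::finite \<Rightarrow> 'n \<Rightarrow> real) \<Rightarrow> ('n \<Rightarrow> real) \<Rightarrow> 'n \<Rightarrow> real" where
  "mat_vec M v i = (\<Sum>j\<in>UNIV. M i j * v j)"

definition delta_arc :: "('n \<Rightarrow> 'n \<Rightarrow> real \<Rightarrow> real) \<Rightarrow> real \<Rightarrow> real \<Rightarrow> real \<Rightarrow> 'n \<Rightarrow> 'n \<Rightarrow> bool" where
  "delta_arc a \<delta> t1 t2 j i \<longleftrightarrow> integral {t1..<t2} (\<lambda>s. \<bar>a i j s\<bar>) \<ge> \<delta> * (t2 - t1)"

text \<open>G_delta[t1,t2): arcs (j,i) meaning j -> i.\<close>
definition G_delta :: "('n \<Rightarrow> 'n \<Rightarrow> real \<Rightarrow> real) \<Rightarrow> real \<Rightarrow> real \<Rightarrow> real \<Rightarrow> ('n \<times> 'n) set" where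
  "G_delta a \<delta> t1 t2 = {(j, i). delta_arc a \<delta> t1 t2 j i}"

definition G_delta_inf :: "('n \<Rightarrow> 'n \<Rightarrow> real \<Rightarrow> real) \<Rightarrow> real \<Rightarrow> ('n \<times> 'n) set" where
  "G_delta_inf a \<delta> = {(j, i). \<exists>t1 t2. 0 \<le> t1 \<and> t1 < t2 \<and> delta_arc a \<delta> t1 t2 j i}"

definition scc :: "('n \<times> 'n) set \<Rightarrow> 'n \<Rightarrow> 'n set" where
  "scc R v = {u. (v, u) \<in> R\<^sup>* \<and> (u, v) \<in> R\<^sup>*}"

definition cond_nodes :: "('n \<times> 'n) set \<Rightarrow> 'n set set" where
  "cond_nodes R = range (scc R)"

definition cond_arcs :: "('n \<times> 'n) set \<Rightarrow> ('n set \<times> 'n set) set" where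
  "cond_arcs R = {(C, D). C \<in> cond_nodes R \<and> D \<in> cond_nodes R \<and> C \<noteq> D \<and>
                     (\<exists>u\<in>C. \<exists>v\<in>D. (u, v) \<in> R)}"

definition cond_has_root :: "('n \<times> 'n) set \<Rightarrow> bool" where
  "cond_has_root R \<longleftrightarrow> (\<exists>C\<in>cond_nodes R. \<forall>D\<in>cond_nodes R. (C, D) \<in> (cond_arcs R)\<^sup>*)"

definition closed_scc :: "('n \<times> 'n) set \<Rightarrow> 'n set \<Rightarrow> bool" where
  "closed_scc R S \<longleftrightarrow> S \<in> cond_nodes R \<and> (\<forall>D\<in>cond_nodes R. (D, S) \<notin> cond_arcs R)"

definition unif_quasi_strongly_connected ::
  "('n \<Rightarrow> 'n \<Rightarrow> real \<Rightarrow> real) \<Rightarrow> real \<Rightarrow> real \<Rightarrow> bool" where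
  "unif_quasi_strongly_connected a \<delta> T \<longleftrightarrow> T > 0 \<and> (\<forall>t\<ge>0. cond_has_root (G_delta a \<delta> t (t + T)))"

definition root_set :: "('n \<times> 'n) set \<Rightarrow> 'n set \<Rightarrow> bool" where
  "root_set R S \<longleftrightarrow> (\<forall>v. v \<notin> S \<longrightarrow> (\<exists>s\<in>S. (s, v) \<in> R\<^sup>*))"

definition balanced_bipartition ::
  "('n \<Rightarrow> 'n \<Rightarrow> real \<Rightarrow> real) \<Rightarrow> 'n set \<Rightarrow> real \<Rightarrow> 'n set \<Rightarrow> 'n set \<Rightarrow> bool" where
  "balanced_bipartition a S t V1 V2 \<longleftrightarrow> S = V1 \<union> V2 \<and> V1 \<inter> V2 = {} \<and>
     (\<forall>j\<in>S. \<forall>k\<in>S. ((j \<in> V1 \<longleftrightarrow> k \<in> V1) \<longrightarrow> a j k t \<ge> 0) \<and>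
                  ((j \<in> V1 \<longleftrightarrow> k \<in> V2) \<longrightarrow> a j k t \<le> 0))"

definition persistently_structurally_balanced ::
  "('n \<Rightarrow> 'n \<Rightarrow> real \<Rightarrow> real) \<Rightarrow> real \<Rightarrow> real \<Rightarrow> 'n set \<Rightarrow> bool" where
  "persistently_structurally_balanced a \<delta> T S \<longleftrightarrow>
     unif_quasi_strongly_connected a \<delta> T \<and> closed_scc (G_delta_inf a \<delta>) S \<and>
     (\<forall>t\<ge>0. \<exists>V1 V2. balanced_bipartition a S t V1 V2 \<and>
        (\<forall>W1 W2. balanced_bipartition a S t W1 W2 \<longrightarrow>
            (W1 = V1 \<and> W2 = V2) \<or> (W1 = V2 \<and> W2 = V1)))"

definition carath_solution ::
  "real \<Rightarrow> (real \<Rightarrow> ('n \<Rightarrow> real) \<Rightarrow> 'n \<Rightarrow> real) \<Rightarrow> (real \<Rightarrow> 'n \<Rightarrow> real) \<Rightarrow> bool" where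
  "carath_solution t0 f x \<longleftrightarrow> (\<forall>i. \<forall>t\<ge>t0.
      (\<lambda>s. f s (x s) i) absolutely_integrable_on {t0..t} \<and>
      x t i = x t0 i + integral {t0..t} (\<lambda>s. f s (x s) i))"

end

theory Submission
  imports Defs
begin


lemma integral_Ico_Icc:
  fixes f :: "real \<Rightarrow> real"
  shows "integral {a..<b} f = integral {a..b} f"
proof (rule integral_spike_set)
  show "negligible {x \<in> {a..<b} - {a..b}. f x \<noteq> 0}" by (rule empty_imp_negligible) auto
  show "negligible {x \<in> {a..b} - {a..<b}. f x \<noteq> 0}"
    by (rule negligible_subset[of "{b}"]) auto
qed

lemma crossing:
  fixes u :: "real \<Rightarrow> real"
  assumes cont: "continuous_on {p..q} u" and pq: "p \<le> q"
    and up: "u p \<le> c" and uq: "c < u q"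
  shows "\<exists>s\<in>{p..q}. u s = c \<and> (\<forall>r\<in>{s..q}. c \<le> u r)"
proof -
  define Z where "Z = {r \<in> {p..q}. u r = c}"
  have "\<exists>r\<in>{p..q}. u r = c" using IVT'[of u p c q] up uq pq cont by auto
  then have Zne: "Z \<noteq> {}" unfolding Z_def by auto
  have Zcl: "closed Z" unfolding Z_def by (rule continuous_closed_preimage_constant[OF cont]) auto
  have Zbd: "bdd_above Z" unfolding Z_def by (rule bdd_aboveI[of _ q]) auto
  define s where "s = Sup Z"
  have sZ: "s \<in> Z" unfolding s_def using closed_contains_Sup[OF Zne Zbd Zcl] .
  have above: "\<And>r. r \<in> Z \<Longrightarrow> r \<le> s" unfolding s_def using Zbd by (simp add: cSup_upper)
  have "c \<le> u r" if r: "r \<in> {s..q}" for r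
  proof (rule ccontr)
    assume "\<not> c \<le> u r"
    then have "u r \<le> c" by simp
    moreover have "continuous_on {r..q} u"
      using cont sZ r unfolding Z_def by (auto intro: continuous_on_subset)
    ultimately obtain z where z: "z \<in> {r..q}" "u z = c" using IVT'[of u r c q] uq r by auto
    have "z \<in> Z" using z sZ r unfolding Z_def by auto
    then have "z \<le> s" by (rule above)
    then have "z = r" "r = s" using z r by auto
    then show False using \<open>\<not> c \<le> u r\<close> z by simp
  qed
  then show ?thesis using sZ unfolding Z_def by auto
qed

lemma core:
  fixes u h d \<psi> :: "real \<Rightarrow> real"
  assumes pq: "p \<le> q"
    and uint: "\<And>r. r \<in> {p..q} \<Longrightarrow> u r = u p + integral {p..r} h"
    and hint: "h integrable_on {p..q}"
    and dint: "d integrable_on {p..q}" and dnn: "\<And>r. r \<in> {p..q} \<Longrightarrow> 0 \<le> d r"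
    and dsmall: "integral {p..q} d \<le> 1/4"
    and pint: "\<psi> integrable_on {p..q}" and pnn: "\<And>r. r \<in> {p..q} \<Longrightarrow> 0 \<le> \<psi> r"
    and c0: "0 \<le> c" and cm: "c \<le> m" and um: "\<And>r. r \<in> {p..q} \<Longrightarrow> u r \<le> m"
    and H: "\<And>r. r \<in> {p..q} \<Longrightarrow> c \<le> u r \<Longrightarrow> h r \<le> d r * (m - u r) - \<psi> r"
  shows "u q \<le> max (c + (m - c)/4) (m + (m - c)/4 - integral {p..q} \<psi>)"
    and "u p \<le> c \<Longrightarrow> u q \<le> c + (m - c)/4"
proof -
  have cont: "continuous_on {p..q} u"
  proof -
    have "continuous_on {p..q} (\<lambda>r. u p + integral {p..r} h)"
      by (intro continuous_intros indefinite_integral_continuous_1 hint)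
    then show ?thesis using continuous_on_eq uint by (metis (no_types, lifting))
  qed
  have seg: "u q - u s \<le> (m - c)/4 - integral {s..q} \<psi>"
    if s: "s \<in> {p..q}" and above: "\<forall>r\<in>{s..q}. c \<le> u r" for s
  proof -
    have sub: "{s..q} \<subseteq> {p..q}" using s by auto
    have hs: "h integrable_on {s..q}" "d integrable_on {s..q}" "\<psi> integrable_on {s..q}"
      using sub hint dint pint integrable_on_subinterval by blast+
    have "u q - u s = integral {s..q} h"
    proof -
      have "integral {p..s} h + integral {s..q} h = integral {p..q} h"
        using s by (intro Henstock_Kurzweil_Integration.integral_combine[OF _ _ hint]) auto
      then show ?thesis using uint[of q] uint[of s] s pq by auto
    qed
    also have "\<dots> \<le> integral {s..q} (\<lambda>r. (m - c) * d r - \<psi> r)"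
    proof (rule integral_le)
      show "h integrable_on {s..q}" by (rule hs)
      show "(\<lambda>r. (m - c) * d r - \<psi> r) integrable_on {s..q}"
        using hs by (intro integrable_diff integrable_on_mult_right) auto
      fix r assume r: "r \<in> {s..q}"
      then have rr: "r \<in> {p..q}" using sub by auto
      have "h r \<le> d r * (m - u r) - \<psi> r" using H[OF rr] above r by auto
      also have "\<dots> \<le> (m - c) * d r - \<psi> r"
      proof -
        have "c \<le> u r" using above r by auto
        then have "d r * (m - u r) \<le> d r * (m - c)" using dnn[OF rr] by (intro mult_left_mono) auto
        then show ?thesis by (simp add: algebra_simps)
      qed
      finally show "h r \<le> (m - c) * d r - \<psi> r" .
    qed
    also have "\<dots> = (m - c) * integral {s..q} d - integral {s..q} \<psi>"
      using hs by (simp add: integral_diff integrable_on_mult_right)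
    also have "\<dots> \<le> (m - c) * (1/4) - integral {s..q} \<psi>"
    proof -
      have "integral {p..s} d + integral {s..q} d = integral {p..q} d"
        using s by (intro Henstock_Kurzweil_Integration.integral_combine[OF _ _ dint]) auto
      moreover have "0 \<le> integral {p..s} d"
        using s dnn by (intro integral_nonneg integrable_on_subinterval[OF dint]) auto
      ultimately have "integral {s..q} d \<le> 1/4" using dsmall by linarith
      then have "(m - c) * integral {s..q} d \<le> (m - c) * (1/4)" using cm by (intro mult_left_mono) auto
      then show ?thesis by linarith
    qed
    finally show ?thesis by simp
  qed
  have pnn_int: "0 \<le> integral {s..q} \<psi>" if "s \<in> {p..q}" for s
    using that pnn by (intro integral_nonneg integrable_on_subinterval[OF pint]) auto
  have cross: "u q \<le> c + (m - c)/4" if r: "r \<in> {p..q}" "u r \<le> c" for r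
  proof (cases "u q \<le> c")
    case True
    have "0 \<le> (m - c)/4" using cm by simp
    then show ?thesis using True by linarith
  next
    case False
    have "continuous_on {r..q} u" using cont r by (auto intro: continuous_on_subset)
    then obtain s where s: "s \<in> {r..q}" "u s = c" "\<forall>r\<in>{s..q}. c \<le> u r"
      using crossing[of r q u c] r False by auto
    have sp: "s \<in> {p..q}" using s r by auto
    show ?thesis using seg[OF sp s(3)] pnn_int[OF sp] s(2) by simp
  qed
  show "u q \<le> max (c + (m - c)/4) (m + (m - c)/4 - integral {p..q} \<psi>)"
  proof (cases "\<exists>r\<in>{p..q}. u r \<le> c")
    case True
    then obtain r where "r \<in> {p..q}" "u r \<le> c" by auto
    then have "u q \<le> c + (m - c)/4" by (rule cross)
    then show ?thesis by (simp add: le_max_iff_disj)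
  next
    case False
    then have "\<forall>r\<in>{p..q}. c \<le> u r" by auto
    then have "u q - u p \<le> (m - c)/4 - integral {p..q} \<psi>" using seg[of p] pq by auto
    then show ?thesis using um[of p] pq by auto
  qed
  show "u p \<le> c \<Longrightarrow> u q \<le> c + (m - c)/4" using cross[of p] pq by auto
qed

locale sys =
  fixes a :: "'n::finite \<Rightarrow> 'n \<Rightarrow> real \<Rightarrow> real"
    and k :: "'n \<Rightarrow> real \<Rightarrow> real"
    and x :: "real \<Rightarrow> 'n \<Rightarrow> real"
    and xd :: "'n \<Rightarrow> real"
    and S :: "'n set"
    and t0 \<delta> T M0 \<kappa> :: real
  assumes A2: "\<And>i t. a i i t = 0"
    and M0: "M0 > 0"
    and A3: "\<And>i j t1 t2. t1 \<le> t2 \<Longrightarrow>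
               (\<lambda>s. a i j s) absolutely_integrable_on {t1..t2} \<and>
               integral {t1..t2} (\<lambda>s. \<bar>a i j s\<bar>) \<le> M0 * (t2 - t1)"
    and Tpos: "T > 0" and delta: "\<delta> > 0" and t0: "t0 \<ge> 0"
    and root: "\<And>t. t \<ge> 0 \<Longrightarrow> root_set (G_delta a \<delta> t (t + T)) S"
    and P2: "\<kappa> > 0"
    and P2S: "\<And>i t. i \<in> S \<Longrightarrow> t \<ge> t0 \<Longrightarrow> k i t \<ge> \<kappa>"
    and P2N: "\<And>j t. j \<notin> S \<Longrightarrow> t \<ge> t0 \<Longrightarrow> k j t = 0"
    and sol: "carath_solution t0
               (\<lambda>t v i. - mat_vec (signed_lap a t) v i
                        + (mat_vec (signed_lap a t) xd i - k i t * (v i - xd i))) x"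
begin

definition e :: "real \<Rightarrow> 'n \<Rightarrow> real" where "e t j = x t j - xd j"
definition dd :: "'n \<Rightarrow> real \<Rightarrow> real" where "dd j t = (\<Sum>p\<in>UNIV. \<bar>a j p t\<bar>)"
definition g :: "'n \<Rightarrow> real \<Rightarrow> real" where
  "g j t = - mat_vec (signed_lap a t) (x t) j
            + (mat_vec (signed_lap a t) xd j - k j t * (x t j - xd j))"

lemma k_nonneg: "t \<ge> t0 \<Longrightarrow> 0 \<le> k j t"
  using P2S[of j t] P2N[of j t] P2 by (cases "j \<in> S") auto

lemma mat_vec_lap: "mat_vec (signed_lap a t) v i = dd i t * v i - (\<Sum>j\<in>UNIV. a i j t * v j)"
proof -
  have diag: "(\<Sum>k\<in>{k. a i k t \<noteq> 0}. \<bar>a i k t\<bar>) = dd i t"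
    unfolding dd_def by (rule sum.mono_neutral_left) auto
  have "mat_vec (signed_lap a t) v i = (\<Sum>j\<in>UNIV. (if i = j then dd i t * v j else 0) - a i j t * v j)"
    unfolding mat_vec_def signed_lap_def diag by (rule sum.cong) (auto simp: A2)
  also have "\<dots> = dd i t * v i - (\<Sum>j\<in>UNIV. a i j t * v j)"
    by (simp add: sum_subtractf)
  finally show ?thesis .
qed

lemma g_eq: "g j t = - dd j t * e t j - k j t * e t j + (\<Sum>p\<in>UNIV. a j p t * e t p)"
proof -
  have "(\<Sum>p\<in>UNIV. a j p t * e t p) = (\<Sum>p\<in>UNIV. a j p t * x t p - a j p t * xd p)"
    unfolding e_def by (simp add: right_diff_distrib)
  also have "\<dots> = (\<Sum>p\<in>UNIV. a j p t * x t p) - (\<Sum>p\<in>UNIV. a j p t * xd p)"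
    by (rule sum_subtractf)
  finally have 1: "(\<Sum>p\<in>UNIV. a j p t * e t p) = (\<Sum>p\<in>UNIV. a j p t * x t p) - (\<Sum>p\<in>UNIV. a j p t * xd p)" .
  have 2: "dd j t * e t j = dd j t * x t j - dd j t * xd j" "k j t * e t j = k j t * x t j - k j t * xd j"
    unfolding e_def by (simp_all add: right_diff_distrib)
  show ?thesis unfolding g_def mat_vec_lap using 1 2 by (simp add: right_diff_distrib)
qed

lemma sol':
  assumes "t0 \<le> t"
  shows "g j absolutely_integrable_on {t0..t} \<and> x t j = x t0 j + integral {t0..t} (g j)"
proof -
  have "\<forall>i. \<forall>t\<ge>t0. g i absolutely_integrable_on {t0..t} \<and> x t i = x t0 i + integral {t0..t} (g i)"
    using sol unfolding carath_solution_def g_def[abs_def] .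
  then show ?thesis using assms by blast
qed

lemma g_int: "t0 \<le> r1 \<Longrightarrow> r1 \<le> r2 \<Longrightarrow> g j integrable_on {r1..r2}"
proof -
  assume r: "t0 \<le> r1" "r1 \<le> r2"
  have "g j integrable_on {t0..r2}" using sol'[of r2 j] r set_lebesgue_integral_eq_integral(1) by auto
  then show ?thesis by (rule integrable_on_subinterval) (use r in auto)
qed

lemma e_int: "t0 \<le> r1 \<Longrightarrow> r1 \<le> r2 \<Longrightarrow> e r2 j = e r1 j + integral {r1..r2} (g j)"
proof -
  assume r: "t0 \<le> r1" "r1 \<le> r2"
  have "integral {t0..r1} (g j) + integral {r1..r2} (g j) = integral {t0..r2} (g j)"
    using r by (intro Henstock_Kurzweil_Integration.integral_combine[OF _ _ g_int]) auto
  then show ?thesis using sol'[of r1 j] sol'[of r2 j] r unfolding e_def by auto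
qed

lemma e_cont: "t0 \<le> p \<Longrightarrow> p \<le> q \<Longrightarrow> continuous_on {p..q} (\<lambda>r. e r j)"
proof -
  assume p: "t0 \<le> p" "p \<le> q"
  have "continuous_on {p..q} (\<lambda>r. e p j + integral {p..r} (g j))"
    using p by (intro continuous_intros indefinite_integral_continuous_1 g_int) auto
  moreover have "e p j + integral {p..r} (g j) = e r j" if "r \<in> {p..q}" for r
    using e_int[of p r j] p that by simp
  ultimately show ?thesis by (rule continuous_on_eq)
qed

lemma absa_int: "t1 \<le> t2 \<Longrightarrow> (\<lambda>s. \<bar>a i j s\<bar>) integrable_on {t1..t2}"
proof -
  assume t: "t1 \<le> t2"
  have "(\<lambda>s. a i j s) absolutely_integrable_on {t1..t2}" using A3[OF t] by blast
  then have "(\<lambda>s. norm (a i j s)) integrable_on {t1..t2}"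
    using absolutely_integrable_on_def by blast
  then show ?thesis by simp
qed

lemma dd_int: "t1 \<le> t2 \<Longrightarrow> dd j integrable_on {t1..t2}"
  unfolding dd_def by (intro integrable_sum absa_int) auto

definition Mb :: real where "Mb = real CARD('n) * M0"

lemma dd_bound: "t1 \<le> t2 \<Longrightarrow> integral {t1..t2} (dd j) \<le> Mb * (t2 - t1)"
proof -
  assume t: "t1 \<le> t2"
  have "integral {t1..t2} (dd j) = (\<Sum>p\<in>UNIV. integral {t1..t2} (\<lambda>s. \<bar>a j p s\<bar>))"
    unfolding dd_def using t by (intro integral_sum absa_int) auto
  also have "\<dots> \<le> (\<Sum>p\<in>(UNIV::'n set). M0 * (t2 - t1))"
    using A3 t by (intro sum_mono) auto
  also have "\<dots> = Mb * (t2 - t1)" unfolding Mb_def by simp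
  finally show ?thesis .
qed

lemma dd_nn: "0 \<le> dd j t" unfolding dd_def by (auto intro: sum_nonneg)

lemma PB:
  assumes r: "r \<ge> t0" and bd: "\<And>p. \<bar>e r p\<bar> \<le> \<Phi>" and sg: "\<bar>\<sigma>\<bar> = (1::real)"
    and u0: "0 \<le> \<sigma> * e r j"
  shows "\<sigma> * g j r \<le> dd j r * (\<Phi> - \<sigma> * e r j) - k j r * (\<sigma> * e r j)
                     - (\<Sum>p\<in>UNIV. \<bar>a j p r\<bar> * (\<Phi> - \<bar>e r p\<bar>))"
proof -
  have s1: "\<sigma> * (\<Sum>p\<in>UNIV. a j p r * e r p) \<le> (\<Sum>p\<in>UNIV. \<bar>a j p r\<bar> * \<bar>e r p\<bar>)"
  proof -
    have "\<sigma> * (\<Sum>p\<in>UNIV. a j p r * e r p) = (\<Sum>p\<in>UNIV. \<sigma> * (a j p r * e r p))"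
      by (simp add: sum_distrib_left)
    also have "\<dots> \<le> (\<Sum>p\<in>UNIV. \<bar>a j p r\<bar> * \<bar>e r p\<bar>)"
    proof (rule sum_mono)
      fix p
      have "\<sigma> * (a j p r * e r p) \<le> \<bar>\<sigma> * (a j p r * e r p)\<bar>" by (rule abs_ge_self)
      also have "\<dots> = \<bar>a j p r\<bar> * \<bar>e r p\<bar>" using sg by (simp add: abs_mult)
      finally show "\<sigma> * (a j p r * e r p) \<le> \<bar>a j p r\<bar> * \<bar>e r p\<bar>" .
    qed
    finally show ?thesis .
  qed
  have s2: "(\<Sum>p\<in>UNIV. \<bar>a j p r\<bar> * (\<Phi> - \<bar>e r p\<bar>)) = dd j r * \<Phi> - (\<Sum>p\<in>UNIV. \<bar>a j p r\<bar> * \<bar>e r p\<bar>)"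
  proof -
    have "(\<Sum>p\<in>UNIV. \<bar>a j p r\<bar> * (\<Phi> - \<bar>e r p\<bar>)) = (\<Sum>p\<in>UNIV. \<bar>a j p r\<bar> * \<Phi> - \<bar>a j p r\<bar> * \<bar>e r p\<bar>)"
      by (simp add: right_diff_distrib)
    also have "\<dots> = (\<Sum>p\<in>UNIV. \<bar>a j p r\<bar> * \<Phi>) - (\<Sum>p\<in>UNIV. \<bar>a j p r\<bar> * \<bar>e r p\<bar>)"
      by (rule sum_subtractf)
    also have "(\<Sum>p\<in>UNIV. \<bar>a j p r\<bar> * \<Phi>) = dd j r * \<Phi>"
      unfolding dd_def by (simp add: sum_distrib_right)
    finally show ?thesis .
  qed
  have "\<sigma> * g j r = - dd j r * (\<sigma> * e r j) - k j r * (\<sigma> * e r j) + \<sigma> * (\<Sum>p\<in>UNIV. a j p r * e r p)"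
    unfolding g_eq by (simp add: ring_distribs mult.left_commute)
  moreover have "dd j r * (\<Phi> - \<sigma> * e r j) = dd j r * \<Phi> - dd j r * (\<sigma> * e r j)"
    by (simp add: right_diff_distrib)
  ultimately show ?thesis using s1 s2 by linarith
qed

definition nn :: nat where "nn = nat \<lceil>4 * Mb * T\<rceil> + 1"
definition h :: real where "h = T / real nn"

lemma Mb_nn: "0 \<le> Mb" unfolding Mb_def using M0 by simp

lemma nn_pos: "1 \<le> nn" unfolding nn_def by simp

lemma h_pos: "0 < h" unfolding h_def using Tpos nn_pos by simp

lemma nn_h: "real nn * h = T" unfolding h_def using nn_pos by simp

lemma Mb_h: "Mb * h \<le> 1/4"
proof -
  have "4 * Mb * T \<le> real nn" unfolding nn_def by linarith
  then have "4 * Mb * T / real nn \<le> 1" using nn_pos by (simp add: divide_le_eq)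
  then show ?thesis unfolding h_def by (simp add: field_simps)
qed

lemma h_le_T: "h \<le> T"
proof -
  have "1 * h \<le> real nn * h" using nn_pos h_pos by (intro mult_right_mono) auto
  then show ?thesis using nn_h by simp
qed

lemma dd_small: "t1 \<le> t2 \<Longrightarrow> t2 \<le> t1 + h \<Longrightarrow> integral {t1..t2} (dd j) \<le> 1/4"
proof -
  assume t: "t1 \<le> t2" "t2 \<le> t1 + h"
  have "integral {t1..t2} (dd j) \<le> Mb * (t2 - t1)" using dd_bound t by simp
  also have "\<dots> \<le> Mb * h" using t Mb_nn by (intro mult_left_mono) auto
  finally show ?thesis using Mb_h by simp
qed

lemma core_sys:
  fixes \<psi> :: "real \<Rightarrow> real"
  assumes p: "t0 \<le> p" and pq: "p \<le> q" and qh: "q \<le> p + h" and sg: "\<bar>\<sigma>\<bar> = (1::real)"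
    and bd: "\<And>r l. r \<in> {p..q} \<Longrightarrow> \<bar>e r l\<bar> \<le> m"
    and c0: "0 \<le> c" and cm: "c \<le> m"
    and pint: "\<psi> integrable_on {p..q}" and pnn: "\<And>r. r \<in> {p..q} \<Longrightarrow> 0 \<le> \<psi> r"
    and H: "\<And>r. r \<in> {p..q} \<Longrightarrow> c \<le> \<sigma> * e r j \<Longrightarrow>
              \<psi> r \<le> k j r * (\<sigma> * e r j) + (\<Sum>l\<in>UNIV. \<bar>a j l r\<bar> * (m - \<bar>e r l\<bar>))"
  shows "\<sigma> * e q j \<le> max (c + (m - c)/4) (m + (m - c)/4 - integral {p..q} \<psi>)"
    and "\<sigma> * e p j \<le> c \<Longrightarrow> \<sigma> * e q j \<le> c + (m - c)/4"
proof -
  have uint: "\<sigma> * e r j = \<sigma> * e p j + integral {p..r} (\<lambda>r. \<sigma> * g j r)" if "r \<in> {p..q}" for r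
  proof -
    have "g j integrable_on {p..r}" using g_int p that by auto
    then have "integral {p..r} (\<lambda>r. \<sigma> * g j r) = \<sigma> * integral {p..r} (g j)"
      by (rule integral_mult[symmetric])
    then show ?thesis using e_int[of p r j] p that by (simp add: distrib_left)
  qed
  have hint: "(\<lambda>r. \<sigma> * g j r) integrable_on {p..q}"
    using g_int[OF p pq] by (rule integrable_on_mult_right)
  have um: "\<sigma> * e r j \<le> m" if "r \<in> {p..q}" for r
  proof -
    have "\<sigma> * e r j \<le> \<bar>\<sigma> * e r j\<bar>" by (rule abs_ge_self)
    also have "\<dots> = \<bar>e r j\<bar>" using sg by (simp add: abs_mult)
    finally show ?thesis using bd[OF that, of j] by simp
  qed
  have HH: "\<sigma> * g j r \<le> dd j r * (m - \<sigma> * e r j) - \<psi> r"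
    if r: "r \<in> {p..q}" and u: "c \<le> \<sigma> * e r j" for r
  proof -
    have r0: "t0 \<le> r" using r p by auto
    have bdr: "\<And>l. \<bar>e r l\<bar> \<le> m" using bd r by blast
    have u0: "0 \<le> \<sigma> * e r j" using u c0 by linarith
    have "\<sigma> * g j r \<le> dd j r * (m - \<sigma> * e r j) - k j r * (\<sigma> * e r j)
                     - (\<Sum>l\<in>UNIV. \<bar>a j l r\<bar> * (m - \<bar>e r l\<bar>))"
      by (rule PB[OF r0 bdr sg u0])
    then show ?thesis using H[OF r u] by linarith
  qed
  show "\<sigma> * e q j \<le> max (c + (m - c)/4) (m + (m - c)/4 - integral {p..q} \<psi>)"
    using core(1)[of p q "\<lambda>r. \<sigma> * e r j" "\<lambda>r. \<sigma> * g j r" "dd j" \<psi> c m, OF pq uint hint dd_int[OF pq] dd_nn dd_small[OF pq qh] pint pnn c0 cm um HH] by simp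
  show "\<sigma> * e p j \<le> c \<Longrightarrow> \<sigma> * e q j \<le> c + (m - c)/4"
    using core(2)[of p q "\<lambda>r. \<sigma> * e r j" "\<lambda>r. \<sigma> * g j r" "dd j" \<psi> c m, OF pq uint hint dd_int[OF pq] dd_nn dd_small[OF pq qh] pint pnn c0 cm um HH] by simp
qed

lemma H0:
  assumes "r \<ge> t0" "0 \<le> c" "c \<le> \<sigma> * e r j" "\<And>l. \<bar>e r l\<bar> \<le> m"
  shows "0 \<le> k j r * (\<sigma> * e r j) + (\<Sum>l\<in>UNIV. \<bar>a j l r\<bar> * (m - \<bar>e r l\<bar>))"
proof -
  have "0 \<le> k j r * (\<sigma> * e r j)" using k_nonneg[OF assms(1)] assms(2,3) by simp
  moreover have "0 \<le> (\<Sum>l\<in>UNIV. \<bar>a j l r\<bar> * (m - \<bar>e r l\<bar>))"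
    using assms(4) by (intro sum_nonneg) simp
  ultimately show ?thesis by simp
qed

lemma sign_choice: "\<exists>\<sigma>::real. \<bar>\<sigma>\<bar> = 1 \<and> \<sigma> * v = \<bar>v\<bar>"
proof (cases "v \<ge> 0")
  case True then show ?thesis by (intro exI[of _ 1]) simp
next
  case False then show ?thesis by (intro exI[of _ "-1"]) simp
qed

lemma abs_le_from_signs:
  assumes "\<And>\<sigma>::real. \<bar>\<sigma>\<bar> = 1 \<Longrightarrow> \<sigma> * v \<le> B" shows "\<bar>v\<bar> \<le> B"
  using sign_choice[of v] assms by metis

lemma NE_step:
  assumes s: "t0 \<le> s" and bd: "\<And>l. \<bar>e s l\<bar> \<le> m"
  shows "\<And>r l. r \<in> {s..s+h} \<Longrightarrow> \<bar>e r l\<bar> \<le> m"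
proof -
  have m0: "0 \<le> m" using bd[of undefined] by linarith
  have "\<forall>l. \<exists>r\<in>{s..s+h}. \<forall>y\<in>{s..s+h}. \<bar>e y l\<bar> \<le> \<bar>e r l\<bar>"
  proof
    fix l
    have "continuous_on {s..s+h} (\<lambda>r. \<bar>e r l\<bar>)"
      using e_cont[of s "s+h" l] s h_pos by (intro continuous_intros) auto
    then show "\<exists>r\<in>{s..s+h}. \<forall>y\<in>{s..s+h}. \<bar>e y l\<bar> \<le> \<bar>e r l\<bar>"
      using h_pos by (intro continuous_attains_sup) auto
  qed
  then obtain R where R: "\<And>l. R l \<in> {s..s+h}" "\<And>l y. y \<in> {s..s+h} \<Longrightarrow> \<bar>e y l\<bar> \<le> \<bar>e (R l) l\<bar>"
    by metis
  define f where "f l = \<bar>e (R l) l\<bar>" for l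
  have "Max (range f) \<in> range f" by (rule Max_in) auto
  then obtain j where j0: "Max (range f) = f j" by blast
  then have j: "f j = Max (range f)" by simp
  have fj: "f l \<le> f j" for l unfolding j by (rule Max_ge) auto
  define \<Phi> where "\<Phi> = f j"
  have allb: "\<bar>e y l\<bar> \<le> \<Phi>" if "y \<in> {s..s+h}" for y l
    using R(2)[OF that, of l] fj[of l] unfolding \<Phi>_def f_def by simp
  have "\<Phi> \<le> m"
  proof (rule ccontr)
    assume "\<not> \<Phi> \<le> m"
    then have mP: "m < \<Phi>" by simp
    obtain \<sigma> :: real where sg: "\<bar>\<sigma>\<bar> = 1" and sv: "\<sigma> * e (R j) j = \<bar>e (R j) j\<bar>"
      using sign_choice by blast
    have Rj: "s \<le> R j" "R j \<le> s + h" using R(1)[of j] by auto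
    have "\<sigma> * e s j \<le> \<bar>\<sigma> * e s j\<bar>" by (rule abs_ge_self)
    then have us: "\<sigma> * e s j \<le> m" using bd[of j] sg by (simp add: abs_mult)
    have "\<sigma> * e (R j) j \<le> m + (\<Phi> - m)/4"
    proof (rule core_sys(2)[of s "R j" \<sigma> \<Phi> m "\<lambda>r. 0" j])
      show "t0 \<le> s" "s \<le> R j" "R j \<le> s + h" "\<bar>\<sigma>\<bar> = 1" using s Rj sg by auto
      show "\<And>r l. r \<in> {s..R j} \<Longrightarrow> \<bar>e r l\<bar> \<le> \<Phi>" using allb Rj by auto
      show "0 \<le> m" "m \<le> \<Phi>" using m0 mP by auto
      show "(\<lambda>r. 0::real) integrable_on {s..R j}" by (rule integrable_0)
      show "\<And>r. r \<in> {s..R j} \<Longrightarrow> 0 \<le> (0::real)" by simp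
      show "\<sigma> * e s j \<le> m" by (rule us)
      fix r assume r: "r \<in> {s..R j}" "m \<le> \<sigma> * e r j"
      show "0 \<le> k j r * (\<sigma> * e r j) + (\<Sum>l\<in>UNIV. \<bar>a j l r\<bar> * (\<Phi> - \<bar>e r l\<bar>))"
        using r s Rj m0 by (intro H0 allb) auto
    qed
    moreover have "\<Phi> = \<sigma> * e (R j) j" using sv unfolding \<Phi>_def f_def by simp
    ultimately have Y: "\<Phi> \<le> m + (\<Phi> - m)/4" by simp
    then have "4 * \<Phi> \<le> 4 * m + (\<Phi> - m)" by (simp add: field_simps)
    then show False using mP by simp
  qed
  then show "\<And>r l. r \<in> {s..s+h} \<Longrightarrow> \<bar>e r l\<bar> \<le> m" by (meson allb order_trans)
qed

lemma NE:
  assumes t1: "t0 \<le> t1" and bd: "\<And>l. \<bar>e t1 l\<bar> \<le> m"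
  shows "\<And>t l. t1 \<le> t \<Longrightarrow> \<bar>e t l\<bar> \<le> m"
proof -
  have steps: "t1 \<le> r \<Longrightarrow> r \<le> t1 + real i * h \<Longrightarrow> \<bar>e r l\<bar> \<le> m" for i :: nat and r l
  proof (induction i arbitrary: r l)
    case 0 then show ?case using bd by simp
  next
    case (Suc i)
    have hi: "0 \<le> real i * h" using h_pos by simp
    show ?case
    proof (cases "r \<le> t1 + real i * h")
      case True then show ?thesis using Suc.IH Suc.prems(1) by blast
    next
      case False
      have "\<And>l. \<bar>e (t1 + real i * h) l\<bar> \<le> m" using Suc.IH hi by simp
      then have A: "\<And>r l. r \<in> {t1 + real i * h..t1 + real i * h + h} \<Longrightarrow> \<bar>e r l\<bar> \<le> m"
        using NE_step[of "t1 + real i * h" m] t1 hi by simp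
      have "t1 + real (Suc i) * h = t1 + real i * h + h" by (simp add: distrib_right)
      then have "r \<in> {t1 + real i * h..t1 + real i * h + h}" using False Suc.prems by simp
      then show ?thesis by (rule A)
    qed
  qed
  fix t l assume t: "t1 \<le> t"
  define i where "i = nat \<lceil>(t - t1) / h\<rceil>"
  have "(t - t1) / h \<le> real i" unfolding i_def by linarith
  then have "t - t1 \<le> real i * h" using h_pos by (simp add: divide_le_eq)
  then show "\<bar>e t l\<bar> \<le> m" using steps[of t i l] t by simp
qed

definition Gb :: "real \<Rightarrow> real \<Rightarrow> bool" where
  "Gb t1 m \<longleftrightarrow> t0 \<le> t1 \<and> (\<forall>r l. t1 \<le> r \<longrightarrow> \<bar>e r l\<bar> \<le> m)"

lemma PERS:
  assumes G: "Gb t1 m" and s: "t1 \<le> s" and es: "\<bar>e s j\<bar> \<le> (1 - \<epsilon>) * m"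
    and eps: "0 \<le> \<epsilon>" "\<epsilon> \<le> 1" and r: "r \<in> {s..s+h}"
  shows "\<bar>e r j\<bar> \<le> (1 - 3/4 * \<epsilon>) * m"
proof (rule abs_le_from_signs)
  fix \<sigma> :: real assume sg: "\<bar>\<sigma>\<bar> = 1"
  have t1: "t0 \<le> t1" and bd: "\<And>r l. t1 \<le> r \<Longrightarrow> \<bar>e r l\<bar> \<le> m" using G unfolding Gb_def by auto
  have m0: "0 \<le> m" using bd[of t1 j] by linarith
  have "\<sigma> * e s j \<le> \<bar>\<sigma> * e s j\<bar>" by (rule abs_ge_self)
  then have us: "\<sigma> * e s j \<le> (1 - \<epsilon>) * m" using es sg by (simp add: abs_mult)
  have "\<sigma> * e r j \<le> (1 - \<epsilon>) * m + (m - (1 - \<epsilon>) * m)/4"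
  proof (rule core_sys(2)[of s r \<sigma> m "(1 - \<epsilon>) * m" "\<lambda>r. 0" j])
    show "t0 \<le> s" "s \<le> r" "r \<le> s + h" "\<bar>\<sigma>\<bar> = 1" using s r sg t1 by auto
    show "\<And>r' l. r' \<in> {s..r} \<Longrightarrow> \<bar>e r' l\<bar> \<le> m" using bd s by auto
    show "0 \<le> (1 - \<epsilon>) * m" using m0 eps by simp
    have "(1 - \<epsilon>) * m \<le> 1 * m" using m0 eps by (intro mult_right_mono) auto
    then show "(1 - \<epsilon>) * m \<le> m" by simp
    show "(\<lambda>r. 0::real) integrable_on {s..r}" by (rule integrable_0)
    show "\<And>r'. r' \<in> {s..r} \<Longrightarrow> 0 \<le> (0::real)" by simp
    show "\<sigma> * e s j \<le> (1 - \<epsilon>) * m" by (rule us)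
    fix r' assume r': "r' \<in> {s..r}" "(1 - \<epsilon>) * m \<le> \<sigma> * e r' j"
    show "0 \<le> k j r' * (\<sigma> * e r' j) + (\<Sum>l\<in>UNIV. \<bar>a j l r'\<bar> * (m - \<bar>e r' l\<bar>))"
      using r' s t1 m0 eps bd by (intro H0) (auto intro: mult_nonneg_nonneg)
  qed
  then show "\<sigma> * e r j \<le> (1 - 3/4 * \<epsilon>) * m" by (simp add: algebra_simps)
qed

lemma PERS_n:
  assumes G: "Gb t1 m" and s: "t1 \<le> s" and es: "\<bar>e s j\<bar> \<le> (1 - \<epsilon>) * m"
    and eps: "0 \<le> \<epsilon>" "\<epsilon> \<le> 1"
  shows "\<And>r. r \<in> {s..s + real i * h} \<Longrightarrow> \<bar>e r j\<bar> \<le> (1 - (3/4)^i * \<epsilon>) * m"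
proof (induction i)
  case 0 then show ?case using es by simp
next
  case (Suc i)
  have m0: "0 \<le> m" using G unfolding Gb_def by (metis abs_ge_zero order.trans order.refl)
  have hi: "0 \<le> real i * h" using h_pos by simp
  have pw: "(3/4::real)^(Suc i) \<le> (3/4)^i" by (rule power_decreasing) auto
  have pw0: "0 \<le> (3/4::real)^i" "(3/4::real)^i \<le> 1" by (auto intro: power_le_one)
  show ?case
  proof (cases "r \<le> s + real i * h")
    case True
    then have "\<bar>e r j\<bar> \<le> (1 - (3/4)^i * \<epsilon>) * m" using Suc by auto
    also have "\<dots> \<le> (1 - (3/4)^(Suc i) * \<epsilon>) * m"
      using pw eps m0 by (intro mult_right_mono) (auto intro: mult_right_mono)
    finally show ?thesis .
  next
    case False
    have e1: "\<bar>e (s + real i * h) j\<bar> \<le> (1 - (3/4)^i * \<epsilon>) * m" using Suc.IH hi by auto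
    have "\<bar>e r j\<bar> \<le> (1 - 3/4 * ((3/4)^i * \<epsilon>)) * m"
    proof (rule PERS[OF G _ e1])
      show "t1 \<le> s + real i * h" using s hi by simp
      show "0 \<le> (3/4)^i * \<epsilon>" using eps by simp
      show "(3/4)^i * \<epsilon> \<le> 1" using pw0 eps by (simp add: mult_le_one)
      show "r \<in> {s + real i * h..s + real i * h + h}" using Suc.prems False by (auto simp: algebra_simps)
    qed
    then show ?thesis by (simp add: ac_simps)
  qed
qed

definition \<beta>S :: real where "\<beta>S = \<kappa> * h / (1 + \<kappa> * h)"

lemma \<beta>S_props: "0 < \<beta>S" "\<beta>S \<le> 1" "\<kappa> * h * (1 - \<beta>S) = \<beta>S"
proof -
  have kh: "0 < \<kappa> * h" using P2 h_pos by simp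
  show "0 < \<beta>S" unfolding \<beta>S_def using kh by simp
  show "\<beta>S \<le> 1" unfolding \<beta>S_def using kh by simp
  show "\<kappa> * h * (1 - \<beta>S) = \<beta>S" unfolding \<beta>S_def using kh by (simp add: field_simps)
qed

lemma Gb_bd: "Gb t1 m \<Longrightarrow> t1 \<le> r \<Longrightarrow> \<bar>e r l\<bar> \<le> m"
  unfolding Gb_def by blast

lemma Gb_m0: "Gb t1 m \<Longrightarrow> 0 \<le> m"
  using Gb_bd[of t1 m t1 undefined] by (meson abs_ge_zero order_trans order_refl)

lemma Gb_t0: "Gb t1 m \<Longrightarrow> t0 \<le> t1"
  unfolding Gb_def by blast

lemma level_mono: "0 \<le> m \<Longrightarrow> y \<le> z \<Longrightarrow> (1 - z) * m \<le> (1 - y) * (m::real)"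
  by (intro mult_right_mono) auto

lemma WS:
  assumes G: "Gb t1 m" and i: "i \<in> S"
  shows "\<bar>e (t1 + T) i\<bar> \<le> (1 - 3/4 * \<beta>S) * m"
proof (rule abs_le_from_signs)
  fix \<sigma> :: real assume sg: "\<bar>\<sigma>\<bar> = 1"
  have m0: "0 \<le> m" by (rule Gb_m0[OF G])
  have t1: "t0 \<le> t1" by (rule Gb_t0[OF G])
  define p where "p = t1 + T - h"
  define q where "q = t1 + T"
  define c where "c = (1 - \<beta>S) * m"
  have pq: "t1 \<le> p" "p \<le> q" "q \<le> p + h" "q - p = h" unfolding p_def q_def using h_le_T h_pos by auto
  have c0: "0 \<le> c" "c \<le> m" unfolding c_def using \<beta>S_props m0 level_mono[of m 0 "\<beta>S"] by auto
  have "\<sigma> * e q i \<le> max (c + (m - c)/4) (m + (m - c)/4 - integral {p..q} (\<lambda>r. \<kappa> * c))"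
  proof (rule core_sys(1)[of p q \<sigma> m c "\<lambda>r. \<kappa> * c" i])
    show "t0 \<le> p" "p \<le> q" "q \<le> p + h" "\<bar>\<sigma>\<bar> = 1" using pq t1 sg by auto
    show "\<And>r l. r \<in> {p..q} \<Longrightarrow> \<bar>e r l\<bar> \<le> m" using Gb_bd[OF G] pq by auto
    show "0 \<le> c" "c \<le> m" by (rule c0)+
    show "(\<lambda>r. \<kappa> * c) integrable_on {p..q}" by (rule integrable_const_ivl)
    show "\<And>r. r \<in> {p..q} \<Longrightarrow> 0 \<le> \<kappa> * c" using P2 c0 by simp
    fix r assume r: "r \<in> {p..q}" "c \<le> \<sigma> * e r i"
    have rt: "t0 \<le> r" using r pq t1 by auto
    have "\<kappa> * c \<le> \<kappa> * (\<sigma> * e r i)" using r P2 by (intro mult_left_mono) auto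
    also have "\<dots> \<le> k i r * (\<sigma> * e r i)" using P2S[OF i rt] r c0 by (intro mult_right_mono) auto
    also have "\<dots> \<le> k i r * (\<sigma> * e r i) + (\<Sum>l\<in>UNIV. \<bar>a i l r\<bar> * (m - \<bar>e r l\<bar>))"
    proof -
      have "0 \<le> (\<Sum>l\<in>UNIV. \<bar>a i l r\<bar> * (m - \<bar>e r l\<bar>))"
        using Gb_bd[OF G] r pq by (intro sum_nonneg) auto
      then show ?thesis by simp
    qed
    finally show "\<kappa> * c \<le> k i r * (\<sigma> * e r i) + (\<Sum>l\<in>UNIV. \<bar>a i l r\<bar> * (m - \<bar>e r l\<bar>))" .
  qed
  moreover have "integral {p..q} (\<lambda>r. \<kappa> * c) = \<beta>S * m"
  proof -
    have "integral {p..q} (\<lambda>r. \<kappa> * c) = h * (\<kappa> * c)" using pq by simp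
    also have "\<dots> = (\<kappa> * h * (1 - \<beta>S)) * m" unfolding c_def by (simp add: ac_simps)
    finally show ?thesis using \<beta>S_props(3) by simp
  qed
  moreover have "c + (m - c)/4 = (1 - 3/4 * \<beta>S) * m" unfolding c_def by (simp add: algebra_simps)
  moreover have "m + (m - c)/4 - \<beta>S * m = (1 - 3/4 * \<beta>S) * m" unfolding c_def by (simp add: algebra_simps)
  ultimately show "\<sigma> * e (t1 + T) i \<le> (1 - 3/4 * \<beta>S) * m" unfolding q_def by simp
qed

lemma path_cross:
  assumes "(s, v) \<in> R\<^sup>*" "s \<in> C" "v \<notin> C"
  shows "\<exists>l j. (l, j) \<in> R \<and> l \<in> C \<and> j \<notin> C"
  using assms by (induction rule: rtrancl_induct) auto

lemma split_pieces:
  fixes f :: "real \<Rightarrow> real"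
  assumes fi: "\<And>a b. a \<le> b \<Longrightarrow> f integrable_on {a..b}" and h0: "0 \<le> hh"
  shows "integral {w..w + real n * hh} f = (\<Sum>i<n. integral {w + real i * hh..w + real (Suc i) * hh} f)"
proof (induction n)
  case 0 then show ?case by simp
next
  case (Suc n)
  have "integral {w..w + real n * hh} f + integral {w + real n * hh..w + real (Suc n) * hh} f
        = integral {w..w + real (Suc n) * hh} f"
    using h0 by (intro Henstock_Kurzweil_Integration.integral_combine fi) (auto simp: distrib_right)
  then show ?case using Suc by simp
qed

lemma pigeon:
  fixes X :: "nat \<Rightarrow> real"
  assumes "1 \<le> n" "real n * b \<le> (\<Sum>i<n. X i)"
  shows "\<exists>i<n. b \<le> X i"
proof (rule ccontr)
  assume "\<not> (\<exists>i<n. b \<le> X i)"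
  then have "\<And>i. i \<in> {..<n} \<Longrightarrow> X i < b" by auto
  moreover have "0 \<in> {..<n}" using assms(1) by simp
  then have "{..<n} \<noteq> {}" by blast
  ultimately have "(\<Sum>i<n. X i) < (\<Sum>i<n. b)" by (intro sum_strict_mono) auto
  then show False using assms(2) by simp
qed

definition lam :: real where "lam = (3/4)^(2*nn+2) * min 1 (\<delta> * h)"

lemma lam_props: "0 < lam" "lam \<le> (3/4)^nn" "lam \<le> 1"
proof -
  have m: "0 < min 1 (\<delta> * h)" "min 1 (\<delta> * h) \<le> 1" using delta h_pos by auto
  show "0 < lam" unfolding lam_def using m by simp
  have "(3/4::real)^(2*nn+2) \<le> (3/4)^nn" by (rule power_decreasing) auto
  moreover have "(3/4::real)^(2*nn+2) * min 1 (\<delta> * h) \<le> (3/4)^(2*nn+2)"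
    using m by (simp add: mult_left_le)
  ultimately show "lam \<le> (3/4)^nn" unfolding lam_def by linarith
  also have "(3/4::real)^nn \<le> 1" by (rule power_le_one) auto
  finally show "lam \<le> 1" .
qed

lemma WIN_C:
  assumes G: "Gb t1 m" and w: "t1 \<le> w" and l: "\<bar>e w l\<bar> \<le> (1 - \<epsilon>) * m"
    and eps: "0 \<le> \<epsilon>" "\<epsilon> \<le> 1"
  shows "\<bar>e (w + T) l\<bar> \<le> (1 - lam * \<epsilon>) * m"
proof -
  have "\<bar>e (w + T) l\<bar> \<le> (1 - (3/4)^nn * \<epsilon>) * m"
    using PERS_n[OF G w l eps, of "w + T" nn] nn_h h_pos Tpos by simp
  also have "\<dots> \<le> (1 - lam * \<epsilon>) * m"
    using Gb_m0[OF G] lam_props eps by (intro level_mono mult_right_mono) auto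
  finally show ?thesis .
qed

lemma WIN:
  assumes G: "Gb t1 m" and w: "t1 \<le> w" and SC: "S \<subseteq> C"
    and lev: "\<And>l. l \<in> C \<Longrightarrow> \<bar>e w l\<bar> \<le> (1 - \<epsilon>) * m"
    and eps: "0 \<le> \<epsilon>" "\<epsilon> \<le> 1" and j0: "j0 \<notin> C"
  shows "\<exists>j. j \<notin> C \<and> \<bar>e (w + T) j\<bar> \<le> (1 - lam * \<epsilon>) * m"
proof -
  have m0: "0 \<le> m" by (rule Gb_m0[OF G])
  have t1: "t0 \<le> t1" by (rule Gb_t0[OF G])
  have w0: "0 \<le> w" using t0 t1 w by linarith
  define R where "R = G_delta a \<delta> w (w + T)"
  have "root_set R S" unfolding R_def using root[OF w0] .
  moreover have j0S: "j0 \<notin> S" using j0 SC by blast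
  ultimately have "\<exists>s\<in>S. (s, j0) \<in> R\<^sup>*" unfolding root_set_def by simp
  then obtain s where s: "s \<in> S" "(s, j0) \<in> R\<^sup>*" by (elim bexE) simp
  have sC: "s \<in> C" using s(1) SC by (rule rev_subsetD)
  obtain l j where lj: "(l, j) \<in> R" "l \<in> C" "j \<notin> C"
    using path_cross[OF s(2) sC j0] by (elim exE conjE) simp
  have arc: "\<delta> * T \<le> integral {w..w + real nn * h} (\<lambda>r. \<bar>a j l r\<bar>)"
    using lj(1) unfolding R_def G_delta_def delta_arc_def integral_Ico_Icc nn_h by simp
  have "integral {w..w + real nn * h} (\<lambda>r. \<bar>a j l r\<bar>)
        = (\<Sum>i<nn. integral {w + real i * h..w + real (Suc i) * h} (\<lambda>r. \<bar>a j l r\<bar>))"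
    using h_pos by (intro split_pieces absa_int) auto
  with arc have "real nn * (\<delta> * h) \<le> (\<Sum>i<nn. integral {w + real i * h..w + real (Suc i) * h} (\<lambda>r. \<bar>a j l r\<bar>))"
    using nn_h by (simp add: ac_simps)
  then obtain i where i: "i < nn" "\<delta> * h \<le> integral {w + real i * h..w + real (Suc i) * h} (\<lambda>r. \<bar>a j l r\<bar>)"
    using pigeon[OF nn_pos] by blast
  define p where "p = w + real i * h"
  define q where "q = w + real (Suc i) * h"
  have sn: "real (Suc i) * h \<le> real nn * h" using i(1) h_pos by (intro mult_right_mono) auto
  have si: "real (Suc i) * h = real i * h + h" by (simp add: distrib_right)
  have i0: "0 \<le> real i * h" using h_pos by simp
  have pq: "w \<le> p" "p \<le> q" "q \<le> p + h" "q \<le> w + real nn * h"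
    unfolding p_def q_def using h_pos sn si i0 by linarith+
  define \<eta> where "\<eta> = (3/4::real)^nn * \<epsilon>"
  have p34: "0 \<le> (3/4::real)^nn" "(3/4::real)^nn \<le> 1" by (auto intro: power_le_one)
  have \<eta>: "0 \<le> \<eta>" "\<eta> \<le> 1" unfolding \<eta>_def using eps p34 mult_le_one[of "(3/4::real)^nn" \<epsilon>]
    by auto
  have levl: "\<bar>e r l\<bar> \<le> (1 - \<eta>) * m" if "r \<in> {w..w + real nn * h}" for r
    unfolding \<eta>_def using PERS_n[OF G w lev[OF lj(2)] eps that] .
  define \<beta> where "\<beta> = \<eta> * min 1 (\<delta> * h)"
  have mm: "0 \<le> min 1 (\<delta> * h)" "min 1 (\<delta> * h) \<le> 1" "min 1 (\<delta> * h) \<le> \<delta> * h"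
    using delta h_pos by auto
  have \<beta>: "0 \<le> \<beta>" "\<beta> \<le> 1" "\<beta> \<le> \<eta> * (\<delta> * h)" unfolding \<beta>_def
    using \<eta> mm mult_le_one[of \<eta> "min 1 (\<delta> * h)"] mult_left_mono[OF mm(3) \<eta>(1)] by auto
  define c where "c = (1 - \<beta>) * m"
  have c0: "0 \<le> c" "c \<le> m" unfolding c_def using \<beta> m0 level_mono[of m 0 \<beta>] by auto
  have qlev: "\<bar>e q j\<bar> \<le> (1 - 3/4 * \<beta>) * m"
  proof (rule abs_le_from_signs)
    fix \<sigma> :: real assume sg: "\<bar>\<sigma>\<bar> = 1"
    have "\<sigma> * e q j \<le> max (c + (m - c)/4)
            (m + (m - c)/4 - integral {p..q} (\<lambda>r. (\<eta> * m) * \<bar>a j l r\<bar>))"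
    proof (rule core_sys(1)[of p q \<sigma> m c "\<lambda>r. (\<eta> * m) * \<bar>a j l r\<bar>" j])
      show "t0 \<le> p" "p \<le> q" "q \<le> p + h" "\<bar>\<sigma>\<bar> = 1" using pq t1 w sg by auto
      show "\<And>r l. r \<in> {p..q} \<Longrightarrow> \<bar>e r l\<bar> \<le> m" using Gb_bd[OF G] pq w by auto
      show "0 \<le> c" "c \<le> m" by (rule c0)+
      show "(\<lambda>r. (\<eta> * m) * \<bar>a j l r\<bar>) integrable_on {p..q}"
        using pq by (intro integrable_on_mult_right absa_int) auto
      show "\<And>r. r \<in> {p..q} \<Longrightarrow> 0 \<le> (\<eta> * m) * \<bar>a j l r\<bar>" using \<eta> m0 by simp
      fix r assume r: "r \<in> {p..q}" "c \<le> \<sigma> * e r j"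
      have rt: "t0 \<le> r" using r pq t1 w by auto
      have rw: "r \<in> {w..w + real nn * h}" using r pq by auto
      have bdr: "\<And>l'. \<bar>e r l'\<bar> \<le> m" using Gb_bd[OF G] rw w by auto
      have "(\<eta> * m) * \<bar>a j l r\<bar> \<le> \<bar>a j l r\<bar> * (m - \<bar>e r l\<bar>)"
      proof -
        have "\<eta> * m \<le> m - \<bar>e r l\<bar>" using levl[OF rw] by (simp add: algebra_simps)
        then have "\<bar>a j l r\<bar> * (\<eta> * m) \<le> \<bar>a j l r\<bar> * (m - \<bar>e r l\<bar>)"
          by (intro mult_left_mono) auto
        then show ?thesis by (simp add: mult.commute)
      qed
      also have "\<dots> \<le> (\<Sum>l'\<in>UNIV. \<bar>a j l' r\<bar> * (m - \<bar>e r l'\<bar>))"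
        by (rule member_le_sum) (use bdr in auto)
      also have "\<dots> \<le> k j r * (\<sigma> * e r j) + (\<Sum>l'\<in>UNIV. \<bar>a j l' r\<bar> * (m - \<bar>e r l'\<bar>))"
        using k_nonneg[OF rt] r c0 by simp
      finally show "(\<eta> * m) * \<bar>a j l r\<bar> \<le> k j r * (\<sigma> * e r j) + (\<Sum>l\<in>UNIV. \<bar>a j l r\<bar> * (m - \<bar>e r l\<bar>))" .
    qed
    moreover have "\<beta> * m \<le> integral {p..q} (\<lambda>r. (\<eta> * m) * \<bar>a j l r\<bar>)"
    proof -
      have "integral {p..q} (\<lambda>r. (\<eta> * m) * \<bar>a j l r\<bar>) = (\<eta> * m) * integral {p..q} (\<lambda>r. \<bar>a j l r\<bar>)"
        using pq by (intro integral_mult[symmetric] absa_int) auto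
      moreover have "\<beta> * m \<le> (\<eta> * m) * (\<delta> * h)" using \<beta>(3) m0
        by (metis mult.assoc mult.commute mult_left_mono)
      moreover have "(\<eta> * m) * (\<delta> * h) \<le> (\<eta> * m) * integral {p..q} (\<lambda>r. \<bar>a j l r\<bar>)"
        using i(2) \<eta> m0 unfolding p_def q_def by (intro mult_left_mono) auto
      ultimately show ?thesis by linarith
    qed
    moreover have "c + (m - c)/4 = (1 - 3/4 * \<beta>) * m" unfolding c_def by (simp add: algebra_simps)
    moreover have "m + (m - c)/4 - \<beta> * m = (1 - 3/4 * \<beta>) * m" unfolding c_def by (simp add: algebra_simps)
    ultimately show "\<sigma> * e q j \<le> (1 - 3/4 * \<beta>) * m" by simp
  qed
  define i' where "i' = nn - Suc i"
  have wT: "w + T = q + real i' * h"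
  proof -
    have "real nn = real (Suc i) + real i'" unfolding i'_def using i(1) by simp
    then have "real nn * h = real (Suc i) * h + real i' * h" by (simp add: distrib_right)
    then show ?thesis unfolding q_def using nn_h by simp
  qed
  have qq: "t1 \<le> q" using pq w by simp
  have b34: "0 \<le> 3/4 * \<beta>" "3/4 * \<beta> \<le> 1" using \<beta> by auto
  have wTin: "w + T \<in> {q..q + real i' * h}" using wT h_pos by simp
  have "\<bar>e (w + T) j\<bar> \<le> (1 - (3/4)^i' * (3/4 * \<beta>)) * m"
    by (rule PERS_n[OF G qq qlev b34 wTin])
  also have "\<dots> \<le> (1 - lam * \<epsilon>) * m"
  proof (rule level_mono[OF m0])
    have "lam * \<epsilon> = (3/4)^(2*nn+2) * min 1 (\<delta> * h) * \<epsilon>" unfolding lam_def by simp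
    also have "\<dots> \<le> (3/4)^(i' + 1 + nn) * min 1 (\<delta> * h) * \<epsilon>"
    proof -
      have "i' + 1 + nn \<le> 2*nn+2" unfolding i'_def by simp
      then have "(3/4::real)^(2*nn+2) \<le> (3/4)^(i' + 1 + nn)" by (intro power_decreasing) auto
      then show ?thesis using eps delta h_pos by (intro mult_right_mono) auto
    qed
    also have "\<dots> = (3/4)^i' * (3/4 * \<beta>)" unfolding \<beta>_def \<eta>_def by (simp add: power_add ac_simps)
    finally show "lam * \<epsilon> \<le> (3/4)^i' * (3/4 * \<beta>)" .
  qed
  finally show ?thesis using lj(3) by blast
qed

lemma S_ne: "S \<noteq> {}"
proof -
  have "root_set (G_delta a \<delta> 0 (0 + T)) S" using root[of 0] by blast
  then show ?thesis unfolding root_set_def by blast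
qed

definition epsq :: "nat \<Rightarrow> real" where "epsq q = lam^q * (3/4 * \<beta>S)"

lemma epsq_props: "0 < epsq q" "epsq q \<le> 1"
proof -
  have l: "0 < lam^q" "lam^q \<le> 1" using lam_props by (auto intro: power_le_one)
  have b: "0 < 3/4 * \<beta>S" "3/4 * \<beta>S \<le> 1" using \<beta>S_props by auto
  show "0 < epsq q" unfolding epsq_def using l b by simp
  show "epsq q \<le> 1" unfolding epsq_def using l b mult_le_one[of "lam^q" "3/4 * \<beta>S"] by simp
qed

lemma ITER:
  assumes G: "Gb t1 m"
  shows "q < CARD('n) \<Longrightarrow> \<exists>C. S \<subseteq> C \<and> q + 1 \<le> card C \<and>
           (\<forall>l\<in>C. \<bar>e (t1 + real (q + 1) * T) l\<bar> \<le> (1 - epsq q) * m)"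
proof (induction q)
  case 0
  have "1 \<le> card S" using S_ne by (simp add: Suc_le_eq card_gt_0_iff)
  moreover have "\<forall>l\<in>S. \<bar>e (t1 + real (0 + 1) * T) l\<bar> \<le> (1 - epsq 0) * m"
    using WS[OF G] unfolding epsq_def by simp
  ultimately show ?case by auto
next
  case (Suc q)
  then obtain C where C: "S \<subseteq> C" "q + 1 \<le> card C"
    "\<And>l. l \<in> C \<Longrightarrow> \<bar>e (t1 + real (q + 1) * T) l\<bar> \<le> (1 - epsq q) * m" by auto
  define w where "w = t1 + real (q + 1) * T"
  have w: "t1 \<le> w" unfolding w_def using Tpos by simp
  have wT: "w + T = t1 + real (Suc q + 1) * T" unfolding w_def by (simp add: algebra_simps)
  have ep: "0 \<le> epsq q" "epsq q \<le> 1" using epsq_props[of q] by auto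
  have le: "lam * epsq q = epsq (Suc q)" unfolding epsq_def by simp
  have Cl: "\<bar>e (w + T) l\<bar> \<le> (1 - epsq (Suc q)) * m" if "l \<in> C" for l
    using WIN_C[OF G w C(3)[OF that, folded w_def] ep] le by simp
  show ?case
  proof (cases "C = UNIV")
    case True
    then have "Suc q + 1 \<le> card C" using Suc.prems by simp
    then show ?thesis using C(1) Cl wT by auto
  next
    case False
    then obtain j0 where j0: "j0 \<notin> C" by auto
    obtain j where j: "j \<notin> C" "\<bar>e (w + T) j\<bar> \<le> (1 - lam * epsq q) * m"
      using WIN[OF G w C(1) C(3)[folded w_def] ep j0] by blast
    have "card (insert j C) = Suc (card C)" using j(1) by simp
    then have "Suc q + 1 \<le> card (insert j C)" using C(2) by simp
    moreover have "\<forall>l\<in>insert j C. \<bar>e (t1 + real (Suc q + 1) * T) l\<bar> \<le> (1 - epsq (Suc q)) * m"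
      using Cl j(2) le wT by auto
    ultimately show ?thesis using C(1) by blast
  qed
qed

definition epsF :: real where "epsF = epsq (CARD('n) - 1)"

lemma CONTR:
  assumes G: "Gb t1 m"
  shows "\<bar>e (t1 + real CARD('n) * T) l\<bar> \<le> (1 - epsF) * m"
proof -
  have N: "CARD('n) - 1 < CARD('n)" by simp
  obtain C where C: "S \<subseteq> C" "CARD('n) - 1 + 1 \<le> card C"
    "\<And>l. l \<in> C \<Longrightarrow> \<bar>e (t1 + real (CARD('n) - 1 + 1) * T) l\<bar> \<le> (1 - epsF) * m"
    using ITER[OF G N] unfolding epsF_def by blast
  have N1: "CARD('n) - 1 + 1 = CARD('n)" by simp
  have "card C \<le> card (UNIV :: 'n set)" by (rule card_mono) auto
  then have "card C = card (UNIV :: 'n set)" using C(2) N1 by simp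
  then have "C = UNIV" by (intro card_subset_eq) auto
  then show ?thesis using C(3)[of l] N1 by simp
qed

lemma CONV: "((\<lambda>t. x t i) \<longlongrightarrow> xd i) at_top"
proof -
  define N where "N = CARD('n)"
  define L where "L = real N * T"
  have L0: "0 < L" unfolding L_def N_def using Tpos by simp
  define \<rho> where "\<rho> = 1 - epsF"
  have \<rho>: "0 \<le> \<rho>" "\<rho> < 1" unfolding \<rho>_def epsF_def using epsq_props by auto
  define m0 where "m0 = Max (range (\<lambda>l. \<bar>e t0 l\<bar>))"
  have m0b: "\<bar>e t0 l\<bar> \<le> m0" for l unfolding m0_def by (rule Max_ge) auto
  have m0nn: "0 \<le> m0" using m0b[of undefined] by linarith
  have G0: "Gb t0 m0" unfolding Gb_def using NE[OF order.refl m0b] by blast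
  have Gk: "Gb (t0 + real k * L) (\<rho>^k * m0)" for k
  proof (induction k)
    case 0 then show ?case using G0 by simp
  next
    case (Suc k)
    define t1 where "t1 = t0 + real k * L"
    have t1L: "t1 + L = t0 + real (Suc k) * L" unfolding t1_def by (simp add: algebra_simps)
    have G: "Gb t1 (\<rho>^k * m0)" using Suc unfolding t1_def .
    have b: "\<bar>e (t1 + L) l\<bar> \<le> \<rho>^(Suc k) * m0" for l
      using CONTR[OF G, of l] unfolding L_def N_def \<rho>_def by (simp add: ac_simps)
    have tt: "t0 \<le> t1 + L" using Gb_t0[OF G] L0 by simp
    show ?case unfolding Gb_def t1L[symmetric] using tt NE[OF tt b] by blast
  qed
  show ?thesis
  proof (rule tendstoI)
    fix \<epsilon> :: real assume \<epsilon>: "0 < \<epsilon>"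
    have "0 < \<epsilon> / (m0 + 1)" using \<epsilon> m0nn by simp
    then obtain k where k: "\<rho>^k < \<epsilon> / (m0 + 1)" using real_arch_pow_inv \<rho>(2) by blast
    have pk: "0 \<le> \<rho>^k" using \<rho> by simp
    have "\<rho>^k * m0 \<le> \<rho>^k * (m0 + 1)" using pk by (intro mult_left_mono) auto
    also have "\<dots> < \<epsilon>" using k m0nn by (simp add: field_simps)
    finally have ek: "\<rho>^k * m0 < \<epsilon>" .
    show "\<forall>\<^sub>F t in at_top. dist (x t i) (xd i) < \<epsilon>"
    proof (rule eventually_at_top_linorderI[of "t0 + real k * L"])
      fix t assume t: "t0 + real k * L \<le> t"
      have "\<bar>e t i\<bar> \<le> \<rho>^k * m0" using Gk[of k] t unfolding Gb_def by blast
      then show "dist (x t i) (xd i) < \<epsilon>" using ek unfolding dist_real_def e_def by simp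
    qed
  qed
qed

end


theorem theorem1:
  fixes a :: "'n::finite \<Rightarrow> 'n \<Rightarrow> real \<Rightarrow> real"
    and k :: "'n \<Rightarrow> real \<Rightarrow> real"
    and x :: "real \<Rightarrow> 'n \<Rightarrow> real"
    and xd :: "'n \<Rightarrow> real"
    and S :: "'n set"
    and t0 \<delta> T M0 \<kappa> :: real
  assumes N2: "CARD('n) \<ge> 2"
    and t0: "t0 \<ge> 0"
    and delta: "\<delta> > 0"
    and A1: "\<And>i j t1 t2. {t \<in> {t1..t2}. \<not> isCont (a i j) t} \<in> null_sets lborel"
    and A2: "\<And>i t. a i i t = 0"
    and M0: "M0 > 0"
    and A3: "\<And>i j t1 t2. t1 \<le> t2 \<Longrightarrow>
               (\<lambda>s. a i j s) absolutely_integrable_on {t1..t2} \<and>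
               integral {t1..t2} (\<lambda>s. \<bar>a i j s\<bar>) \<le> M0 * (t2 - t1)"
    and UQSC: "unif_quasi_strongly_connected a \<delta> T"
    and root: "\<And>t. t \<ge> 0 \<Longrightarrow> root_set (G_delta a \<delta> t (t + T)) S"
    and PSB: "persistently_structurally_balanced a \<delta> T S"
    and P1: "\<And>i. {t. t \<ge> t0 \<and> \<not> isCont (k i) t} \<in> null_sets lborel"
    and P2: "\<kappa> > 0"
    and P2S: "\<And>i t. i \<in> S \<Longrightarrow> t \<ge> t0 \<Longrightarrow> k i t \<ge> \<kappa>"
    and P2N: "\<And>j t. j \<notin> S \<Longrightarrow> t \<ge> t0 \<Longrightarrow> k j t = 0"
    and sol: "carath_solution t0
               (\<lambda>t v i. - mat_vec (signed_lap a t) v i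
                        + (mat_vec (signed_lap a t) xd i - k i t * (v i - xd i))) x"
  shows "\<forall>i. ((\<lambda>t. x t i) \<longlongrightarrow> xd i) at_top"
proof -
  have Tpos: "T > 0" using UQSC unfolding unif_quasi_strongly_connected_def by blast
  interpret sys a k x xd S t0 \<delta> T M0 \<kappa>
    using A2 M0 A3 Tpos delta t0 root P2 P2S P2N sol by unfold_locales auto
  show ?thesis using CONV by blast
qed

end
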